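(* Let $K_-,K_+>0$ and define, for the two-layered wavenumber $K(X)=K_-$ for $X<0$, $K(X)=K_+$ for $X>0$, the objects $\Lambda^\pm$, $\beta^\pm$, $R^\pm$, $T^\pm$, $\Psi^\pm$ as in the context. Then: (i) for all $(\lambda,X)\in\Lambda^\pm\times\mathbb{R}$, $|\Psi^\pm(\lambda,X)|\le 2$; (ii) with $\mathbb{D}:=\mathbb{C}\setminus(-\infty,-\min(K_-^2,K_+^2)]$, each of the functions $\lambda\mapsto\beta^\pm(\lambda)$, $\lambda\mapsto R^\pm(\lambda)$, $\lambda\mapsto T^\pm(\lambda)$, and $\lambda\mapsto\Psi^\pm(\lambda,X)$ for every fixed $X\in\mathbb{R}$ (each considered on the real interval $(-\min(K_-^2,K_+^2),+\infty)$) has an analytic continuation to $\mathbb{D}$; moreover the analytic continuations of $(\lambda,X)\mapsto\Psi^\pm(\lambda,X)$ are bounded on every compact subset of $\mathbb{D}\times\mathbb{R}$.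
   Context: $\Lambda^\pm:=(-K_\pm^2,+\infty)$. For $\lambda\in\mathbb{R}$, $\beta^\pm(\lambda):=\sqrt{\lambda+K_\pm^2}$ if $\lambda\ge-K_\pm^2$ and $\beta^\pm(\lambda):=i\sqrt{-\lambda-K_\pm^2}$ if $\lambda<-K_\pm^2$. $R^\pm(\lambda):=\frac{\beta^\pm(\lambda)-\beta^\mp(\lambda)}{\beta^+(\lambda)+\beta^-(\lambda)}$, $T^\pm(\lambda):=\frac{2\beta^\pm(\lambda)}{\beta^+(\lambda)+\beta^-(\lambda)}$. For $(\lambda,X)\in\Lambda^\pm\times\mathbb{R}$: $\Psi^\pm(\lambda,X):=e^{\mp i\beta^\pm(\lambda)X}+R^\pm(\lambda)e^{\pm i\beta^\pm(\lambda)X}$ if $\pm X>0$, and $\Psi^\pm(\lambda,X):=T^\pm(\lambda)e^{\mp i\beta^\mp(\lambda)X}$ if $\mp X>0$. *)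

theory Defs
  imports "HOL-Analysis.Analysis"
begin

text \<open>Two-layer setting with wavenumbers Km (for X < 0) and Kp (for X > 0).
  The sign index s :: bool encodes the superscript: True = +, False = -.\<close>

definition Kof :: "real \<Rightarrow> real \<Rightarrow> bool \<Rightarrow> real" where
  "Kof Km Kp s = (if s then Kp else Km)"

definition sgn_of :: "bool \<Rightarrow> real" where
  "sgn_of s = (if s then 1 else -1)"

definition Lambda :: "real \<Rightarrow> real \<Rightarrow> bool \<Rightarrow> real set" where
  "Lambda Km Kp s = {l. - (Kof Km Kp s)\<^sup>2 < l}"

definition beta :: "real \<Rightarrow> real \<Rightarrow> bool \<Rightarrow> real \<Rightarrow> complex" where
  "beta Km Kp s l =
     (if l \<ge> - (Kof Km Kp s)\<^sup>2 then complex_of_real (sqrt (l + (Kof Km Kp s)\<^sup>2))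
      else \<i> * complex_of_real (sqrt (- l - (Kof Km Kp s)\<^sup>2)))"

definition Rcoef :: "real \<Rightarrow> real \<Rightarrow> bool \<Rightarrow> real \<Rightarrow> complex" where
  "Rcoef Km Kp s l =
     (beta Km Kp s l - beta Km Kp (\<not> s) l) / (beta Km Kp True l + beta Km Kp False l)"

definition Tcoef :: "real \<Rightarrow> real \<Rightarrow> bool \<Rightarrow> real \<Rightarrow> complex" where
  "Tcoef Km Kp s l =
     2 * beta Km Kp s l / (beta Km Kp True l + beta Km Kp False l)"

text \<open>Psi^s(lambda,X): for s X > 0 (taken as s X \<ge> 0, the two formulas agree at X = 0
  since 1 + R = T) it is exp(-s i beta^s X) + R^s exp(s i beta^s X); otherwise
  T^s exp(-s i beta^{-s} X).\<close>
definition Psi :: "real \<Rightarrow> real \<Rightarrow> bool \<Rightarrow> real \<Rightarrow> real \<Rightarrow> complex" where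
  "Psi Km Kp s l X =
     (if sgn_of s * X \<ge> 0 then
        exp (- complex_of_real (sgn_of s) * \<i> * beta Km Kp s l * complex_of_real X)
        + Rcoef Km Kp s l * exp (complex_of_real (sgn_of s) * \<i> * beta Km Kp s l * complex_of_real X)
      else
        Tcoef Km Kp s l * exp (- complex_of_real (sgn_of s) * \<i> * beta Km Kp (\<not> s) l * complex_of_real X))"

definition slitD :: "real \<Rightarrow> real \<Rightarrow> complex set" where
  "slitD Km Kp = - {complex_of_real x | x. x \<le> - min (Km\<^sup>2) (Kp\<^sup>2)}"

definition realI :: "real \<Rightarrow> real \<Rightarrow> real set" where
  "realI Km Kp = {l. - min (Km\<^sup>2) (Kp\<^sup>2) < l}"

end

theory Submission
  imports Defs
begin

lemma norm_diff_le_sum: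
  fixes a :: real and bb :: complex
  assumes "a > 0" "Re bb \<ge> 0"
  shows "cmod (of_real a - bb) \<le> cmod (of_real a + bb)"
proof -
  have "(a - Re bb)\<^sup>2 + (Im bb)\<^sup>2 \<le> (a + Re bb)\<^sup>2 + (Im bb)\<^sup>2"
    using assms by (simp add: power2_eq_square algebra_simps)
  then show ?thesis by (simp add: cmod_def)
qed

lemma part1_gen:
  fixes a X \<sigma> :: real and bb :: complex
  assumes a: "a > 0" and re: "Re bb \<ge> 0" and im: "Im bb \<ge> 0" and sig: "\<sigma> = 1 \<or> \<sigma> = -1"
  shows "cmod (exp (- of_real \<sigma> * \<i> * of_real a * of_real X)
           + (of_real a - bb) / (of_real a + bb) * exp (of_real \<sigma> * \<i> * of_real a * of_real X)) \<le> 2"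
    and "\<sigma> * X < 0 \<Longrightarrow> cmod (2 * of_real a / (of_real a + bb) * exp (- of_real \<sigma> * \<i> * bb * of_real X)) \<le> 2"
proof -
  have D: "cmod (of_real a + bb) \<ge> a"
    using complex_Re_le_cmod[of "of_real a + bb"] re by simp
  have Dpos: "cmod (of_real a + bb) > 0" using D a by linarith
  have e1: "cmod (exp (- of_real \<sigma> * \<i> * of_real a * of_real X)) = 1"
    by (simp add: norm_exp_eq_Re)
  have e2: "cmod (exp (of_real \<sigma> * \<i> * of_real a * of_real X)) = 1"
    by (simp add: norm_exp_eq_Re)
  have R: "cmod ((of_real a - bb) / (of_real a + bb)) \<le> 1"
    using norm_diff_le_sum[OF a re] Dpos by (simp add: norm_divide divide_le_eq_1)
  show "cmod (exp (- of_real \<sigma> * \<i> * of_real a * of_real X)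
           + (of_real a - bb) / (of_real a + bb) * exp (of_real \<sigma> * \<i> * of_real a * of_real X)) \<le> 2"
  proof -
    have "cmod ((of_real a - bb) / (of_real a + bb) * exp (of_real \<sigma> * \<i> * of_real a * of_real X)) \<le> 1"
      unfolding norm_mult e2 using R by simp
    then show ?thesis
      using norm_triangle_ineq[of "exp (- of_real \<sigma> * \<i> * of_real a * of_real X)"
        "(of_real a - bb) / (of_real a + bb) * exp (of_real \<sigma> * \<i> * of_real a * of_real X)"]
      e1 by linarith
  qed
  assume neg: "\<sigma> * X < 0"
  have "Re (- of_real \<sigma> * \<i> * bb * of_real X) = \<sigma> * X * Im bb" by simp
  also have "\<dots> \<le> 0" using neg im by (simp add: mult_nonpos_nonneg)
  finally have e3: "cmod (exp (- of_real \<sigma> * \<i> * bb * of_real X)) \<le> 1"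
    by (simp add: norm_exp_eq_Re)
  have T: "cmod (2 * of_real a / (of_real a + bb)) \<le> 2"
    using D Dpos a by (simp add: norm_divide divide_le_eq)
  show "cmod (2 * of_real a / (of_real a + bb) * exp (- of_real \<sigma> * \<i> * bb * of_real X)) \<le> 2"
    unfolding norm_mult using T e3 mult_mono[OF T e3] by simp
qed

lemma beta_props:
  shows "Re (beta Km Kp s l) \<ge> 0" "Im (beta Km Kp s l) \<ge> 0"
  by (auto simp: beta_def)

lemma beta_pos:
  assumes "l \<in> Lambda Km Kp s"
  shows "beta Km Kp s l = of_real (sqrt (l + (Kof Km Kp s)\<^sup>2))" "sqrt (l + (Kof Km Kp s)\<^sup>2) > 0"
  using assms by (auto simp: beta_def Lambda_def)



lemma denom_swap: "beta Km Kp True l + beta Km Kp False l = beta Km Kp s l + beta Km Kp (\<not> s) l"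
  by (cases s) (simp_all add: add.commute)

lemma part1:
  assumes "l \<in> Lambda Km Kp s"
  shows "cmod (Psi Km Kp s l X) \<le> 2"
proof -
  define a where "a = sqrt (l + (Kof Km Kp s)\<^sup>2)"
  define bb where "bb = beta Km Kp (\<not> s) l"
  have ha: "beta Km Kp s l = of_real a" "a > 0" using beta_pos[OF assms] by (simp_all add: a_def)
  have sig: "sgn_of s = 1 \<or> sgn_of s = -1" by (simp add: sgn_of_def)
  have R: "Rcoef Km Kp s l = (of_real a - bb) / (of_real a + bb)"
    unfolding Rcoef_def denom_swap[of Km Kp l s] ha bb_def ..
  have T: "Tcoef Km Kp s l = 2 * of_real a / (of_real a + bb)"
    unfolding Tcoef_def denom_swap[of Km Kp l s] ha bb_def ..
  note g = part1_gen[OF ha(2) beta_props(1)[of Km Kp "\<not> s" l, folded bb_def]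
      beta_props(2)[of Km Kp "\<not> s" l, folded bb_def] sig, of X]
  show ?thesis
  proof (cases "sgn_of s * X \<ge> 0")
    case True
    then show ?thesis unfolding Psi_def R ha using g(1) by simp
  next
    case False
    then show ?thesis unfolding Psi_def T bb_def[symmetric] using g(2) by simp
  qed
qed

lemma slit_ok:
  assumes "z \<in> slitD Km Kp"
  shows "z + of_real ((Kof Km Kp s)\<^sup>2) \<notin> \<real>\<^sub>\<le>\<^sub>0"
proof
  assume "z + of_real ((Kof Km Kp s)\<^sup>2) \<in> \<real>\<^sub>\<le>\<^sub>0"
  then have h: "Im z = 0" "Re z + (Kof Km Kp s)\<^sup>2 \<le> 0" by (auto simp: complex_nonpos_Reals_iff)
  have "z = of_real (Re z)" using h(1) by (simp add: complex_eq_iff)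
  moreover have "Re z \<le> - min (Km\<^sup>2) (Kp\<^sup>2)" using h(2) by (cases s) (auto simp: Kof_def)
  ultimately show False using assms unfolding slitD_def by auto
qed

lemma Re_csqrt_pos:
  assumes "w \<notin> \<real>\<^sub>\<le>\<^sub>0"
  shows "Re (csqrt w) > 0"
proof (rule ccontr)
  assume "\<not> Re (csqrt w) > 0"
  then have "Re (csqrt w) = 0" using Re_csqrt[of w] by linarith
  then have "csqrt w = \<i> * of_real (Im (csqrt w))" by (simp add: complex_eq_iff)
  then have "w = (\<i> * of_real (Im (csqrt w)))\<^sup>2" by (metis power2_csqrt)
  then have "w = of_real (- (Im (csqrt w))\<^sup>2)" by (simp add: power_mult_distrib)
  then show False using assms by (metis complex_nonpos_Reals_iff Im_complex_of_real Re_complex_of_real neg_le_0_iff_le zero_le_power2)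
qed

lemma real_agree:
  assumes "l \<in> realI Km Kp"
  shows "csqrt (of_real l + of_real ((Kof Km Kp s)\<^sup>2)) = beta Km Kp s l"
proof -
  have "min (Km\<^sup>2) (Kp\<^sup>2) \<le> (Kof Km Kp s)\<^sup>2" by (cases s) (auto simp: Kof_def)
  then have p: "l + (Kof Km Kp s)\<^sup>2 > 0" using assms by (auto simp: realI_def)
  then have "csqrt (of_real l + of_real ((Kof Km Kp s)\<^sup>2)) = of_real (sqrt (l + (Kof Km Kp s)\<^sup>2))"
    by (metis csqrt_of_real less_imp_le of_real_add)
  then show ?thesis using p by (simp add: beta_def)
qed


theorem proposition2p1:
  fixes Km Kp :: real
  assumes "Km > 0" and "Kp > 0"
  shows "\<forall>s :: bool.
     (\<forall>l \<in> Lambda Km Kp s. \<forall>X :: real. cmod (Psi Km Kp s l X) \<le> 2)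
   \<and> (\<exists>g. g analytic_on slitD Km Kp \<and>
          (\<forall>l \<in> realI Km Kp. g (complex_of_real l) = beta Km Kp s l))
   \<and> (\<exists>g. g analytic_on slitD Km Kp \<and>
          (\<forall>l \<in> realI Km Kp. g (complex_of_real l) = Rcoef Km Kp s l))
   \<and> (\<exists>g. g analytic_on slitD Km Kp \<and>
          (\<forall>l \<in> realI Km Kp. g (complex_of_real l) = Tcoef Km Kp s l))
   \<and> (\<exists>G :: complex \<Rightarrow> real \<Rightarrow> complex.
          (\<forall>X :: real. (\<lambda>z. G z X) analytic_on slitD Km Kp \<and>
             (\<forall>l \<in> realI Km Kp. G (complex_of_real l) X = Psi Km Kp s l X))
        \<and> (\<forall>C :: (complex \<times> real) set. compact C \<and> C \<subseteq> slitD Km Kp \<times> UNIV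
              \<longrightarrow> bounded ((\<lambda>(z, X). G z X) ` C)))"
proof (intro allI)
  fix s :: bool
  define S where "S = slitD Km Kp"
  define bz where "bz = (\<lambda>t z. csqrt (z + of_real ((Kof Km Kp t)\<^sup>2)))"
  have an: "bz t analytic_on S" for t
    unfolding bz_def S_def by (intro analytic_intros) (use slit_ok in auto)
  have ag: "bz t (of_real l) = beta Km Kp t l" if "l \<in> realI Km Kp" for t l
    unfolding bz_def using real_agree[OF that] .
  have nz: "bz True z + bz False z \<noteq> 0" if "z \<in> S" for z
  proof -
    have "Re (bz t z) > 0" for t
      unfolding bz_def by (rule Re_csqrt_pos[OF slit_ok]) (use that in \<open>simp add: S_def\<close>)
    then have "Re (bz True z) > 0" "Re (bz False z) > 0" by auto
    then have "Re (bz True z + bz False z) > 0" by simp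
    then show ?thesis by (metis less_irrefl zero_complex.sel(1))
  qed
  define Rz where "Rz = (\<lambda>z. (bz s z - bz (\<not> s) z) / (bz True z + bz False z))"
  define Tz where "Tz = (\<lambda>z. 2 * bz s z / (bz True z + bz False z))"
  define f1 where "f1 = (\<lambda>z X. exp (- complex_of_real (sgn_of s) * \<i> * bz s z * complex_of_real X)
        + Rz z * exp (complex_of_real (sgn_of s) * \<i> * bz s z * complex_of_real X))"
  define f2 where "f2 = (\<lambda>z X. Tz z * exp (- complex_of_real (sgn_of s) * \<i> * bz (\<not> s) z * complex_of_real X))"
  define G where "G = (\<lambda>z X. if sgn_of s * X \<ge> 0 then f1 z X else f2 z X)"
  have anR: "Rz analytic_on S" unfolding Rz_def using an nz by (intro analytic_intros) auto
  have anT: "Tz analytic_on S" unfolding Tz_def using an nz by (intro analytic_intros) auto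
  have agR: "Rz (of_real l) = Rcoef Km Kp s l" if "l \<in> realI Km Kp" for l
    unfolding Rz_def Rcoef_def using ag[OF that] by simp
  have agT: "Tz (of_real l) = Tcoef Km Kp s l" if "l \<in> realI Km Kp" for l
    unfolding Tz_def Tcoef_def using ag[OF that] by simp
  have anG: "(\<lambda>z. G z X) analytic_on S" for X
  proof (cases "sgn_of s * X \<ge> 0")
    case True
    then show ?thesis unfolding G_def f1_def using an anR by (simp, intro analytic_intros) auto
  next
    case False
    then show ?thesis unfolding G_def f2_def using an anT by (simp, intro analytic_intros) auto
  qed
  have agG: "G (of_real l) X = Psi Km Kp s l X" if "l \<in> realI Km Kp" for l X
    unfolding G_def f1_def f2_def Psi_def using ag[OF that] agR[OF that] agT[OF that] by simp
  have bd: "bounded ((\<lambda>(z, X). G z X) ` C)" if C: "compact C" "C \<subseteq> S \<times> UNIV" for C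
  proof -
    have fC: "fst ` C \<subseteq> S" using C by auto
    have cb: "continuous_on C (\<lambda>p. bz t (fst p))" for t
      by (rule continuous_on_compose2[OF holomorphic_on_imp_continuous_on[OF analytic_imp_holomorphic[OF an]] continuous_on_fst[OF continuous_on_id] fC])
    have nzC: "\<forall>p\<in>C. bz True (fst p) + bz False (fst p) \<noteq> 0" using nz fC by auto
    have c1: "continuous_on C (\<lambda>p. f1 (fst p) (snd p))"
      unfolding f1_def Rz_def using cb nzC by (intro continuous_intros) auto
    have c2: "continuous_on C (\<lambda>p. f2 (fst p) (snd p))"
      unfolding f2_def Tz_def using cb nzC by (intro continuous_intros) auto
    have "(\<lambda>(z, X). G z X) ` C \<subseteq> (\<lambda>p. f1 (fst p) (snd p)) ` C \<union> (\<lambda>p. f2 (fst p) (snd p)) ` C"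
    proof
      fix y assume "y \<in> (\<lambda>(z, X). G z X) ` C"
      then obtain z X where zX: "(z, X) \<in> C" "y = G z X" by auto
      show "y \<in> (\<lambda>p. f1 (fst p) (snd p)) ` C \<union> (\<lambda>p. f2 (fst p) (snd p)) ` C"
      proof (cases "sgn_of s * X \<ge> 0")
        case True
        then have "y = f1 (fst (z, X)) (snd (z, X))" using zX by (simp add: G_def)
        then have "y \<in> (\<lambda>p. f1 (fst p) (snd p)) ` C" by (rule rev_image_eqI[OF zX(1)])
        then show ?thesis by (rule UnI1)
      next
        case False
        then have "y = f2 (fst (z, X)) (snd (z, X))" using zX by (simp add: G_def)
        then have "y \<in> (\<lambda>p. f2 (fst p) (snd p)) ` C" by (rule rev_image_eqI[OF zX(1)])
        then show ?thesis by (rule UnI2)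
      qed
    qed
    moreover have "bounded ((\<lambda>p. f1 (fst p) (snd p)) ` C \<union> (\<lambda>p. f2 (fst p) (snd p)) ` C)"
      using compact_continuous_image[OF c1 C(1)] compact_continuous_image[OF c2 C(1)]
      by (simp add: compact_imp_bounded)
    ultimately show ?thesis using bounded_subset by blast
  qed
  show "(\<forall>l \<in> Lambda Km Kp s. \<forall>X :: real. cmod (Psi Km Kp s l X) \<le> 2)
   \<and> (\<exists>g. g analytic_on slitD Km Kp \<and>
          (\<forall>l \<in> realI Km Kp. g (complex_of_real l) = beta Km Kp s l))
   \<and> (\<exists>g. g analytic_on slitD Km Kp \<and>
          (\<forall>l \<in> realI Km Kp. g (complex_of_real l) = Rcoef Km Kp s l))
   \<and> (\<exists>g. g analytic_on slitD Km Kp \<and>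
          (\<forall>l \<in> realI Km Kp. g (complex_of_real l) = Tcoef Km Kp s l))
   \<and> (\<exists>G :: complex \<Rightarrow> real \<Rightarrow> complex.
          (\<forall>X :: real. (\<lambda>z. G z X) analytic_on slitD Km Kp \<and>
             (\<forall>l \<in> realI Km Kp. G (complex_of_real l) X = Psi Km Kp s l X))
        \<and> (\<forall>C :: (complex \<times> real) set. compact C \<and> C \<subseteq> slitD Km Kp \<times> UNIV
              \<longrightarrow> bounded ((\<lambda>(z, X). G z X) ` C)))"
  proof (intro conjI)
    show "\<forall>l \<in> Lambda Km Kp s. \<forall>X :: real. cmod (Psi Km Kp s l X) \<le> 2"
      using part1 by blast
    show "\<exists>g. g analytic_on slitD Km Kp \<and> (\<forall>l \<in> realI Km Kp. g (complex_of_real l) = beta Km Kp s l)"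
      using an[of s] ag[of _ s] unfolding S_def by blast
    show "\<exists>g. g analytic_on slitD Km Kp \<and> (\<forall>l \<in> realI Km Kp. g (complex_of_real l) = Rcoef Km Kp s l)"
      using anR agR unfolding S_def by blast
    show "\<exists>g. g analytic_on slitD Km Kp \<and> (\<forall>l \<in> realI Km Kp. g (complex_of_real l) = Tcoef Km Kp s l)"
      using anT agT unfolding S_def by blast
    show "\<exists>G :: complex \<Rightarrow> real \<Rightarrow> complex.
          (\<forall>X :: real. (\<lambda>z. G z X) analytic_on slitD Km Kp \<and>
             (\<forall>l \<in> realI Km Kp. G (complex_of_real l) X = Psi Km Kp s l X))
        \<and> (\<forall>C :: (complex \<times> real) set. compact C \<and> C \<subseteq> slitD Km Kp \<times> UNIV
              \<longrightarrow> bounded ((\<lambda>(z, X). G z X) ` C))"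
    proof (rule exI[of _ G], intro conjI allI impI ballI)
      fix X show "(\<lambda>z. G z X) analytic_on slitD Km Kp" using anG unfolding S_def .
    next
      fix X l assume "l \<in> realI Km Kp" then show "G (complex_of_real l) X = Psi Km Kp s l X" by (rule agG)
    next
      fix C :: "(complex \<times> real) set" assume "compact C \<and> C \<subseteq> slitD Km Kp \<times> UNIV"
      then show "bounded ((\<lambda>(z, X). G z X) ` C)" using bd unfolding S_def by blast
    qed
  qed
qed

end
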